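(* Let $(W,V)$ be an independent-type $\mathcal Y$-valued transition matrix on $\mathcal X$ with $W$ irreducible, and $P$ a distribution on $\mathcal X$. Then $$\mathcal L^I_{2,W,V}=\big\{([W,A],C)\in\mathcal G^I:\ A\in M_d(\mathbb R),\ A^Tu_{\mathcal X}=0,\ W[D(V_y),A]=WD(C_y)\ \forall y\in\mathcal Y\big\},$$ $$\mathcal L^I_{2,P,W,V}=\big\{([W,A],C)\in\mathcal G^I:\ A\in M_d(\mathbb R),\ A^Tu_{\mathcal X}=0,\ AP=0,\ W[D(V_y),A]=WD(C_y)\ \forall y\in\mathcal Y\big\},$$ where $[X,Y]=XY-YX$.
   Context: Let $\mathcal X=\{1,\dots,d\}$, $\mathcal Y=\{1,\dots,d_Y\}$, $u_{\mathcal X}\in\mathbb R^{\mathcal X}$ the all-ones vector. An independent-type $\mathcal Y$-valued transition matrix $(W,V)$ consists of a column-stochastic $d\times d$ matrix $W(x|x')$ and a transition matrix $V$ from $\mathcal X$ to $\mathcal Y$ ($V(y|x')\ge0$, $\sum_yV(y|x')=1$), defining $W_y:=WD(V_y)$, where $V_y\in\mathbb R^{\mathcal X}$, $V_y(x')=V(y|x')$, and $D(v)$ is the diagonal matrix with diagonal $v$. $\mathcal G^I$ is the set of pairs $(B,C)$ with $B$ a real $d\times d$ matrix vanishing wherever $W(x|x')=0$ and $C=(C_y)_{y\in\mathcal Y}$, $C_y\in\mathbb R^{\mathcal X}$, $C_y(x')=0$ wherever $V(y|x')=0$. $\mathcal L^I_{1,W,V}:=\{(B,C)\in\mathcal G^I: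 B^Tu_{\mathcal X}=0,\ \sum_yC_y=0\}$. Let $\mathcal L_2:=\{(W_yA-AW_y)_{y\in\mathcal Y}: A\in M_d(\mathbb R),\ A^Tu_{\mathcal X}=0\}$ and $\mathcal L_{2,P}:=\{(W_yA-AW_y)_{y}: A^Tu_{\mathcal X}=0,\ AP=0\}$. Then $\mathcal L^I_{2,W,V}:=\{(B,C)\in\mathcal L^I_{1,W,V}: (BD(V_y)+WD(C_y))_{y}\in\mathcal L_2\}$ and $\mathcal L^I_{2,P,W,V}:=\{(B,C)\in\mathcal L^I_{1,W,V}:(BD(V_y)+WD(C_y))_y\in\mathcal L_{2,P}\}$. *)

theory Defs
  imports "HOL-Analysis.Analysis"
begin

text \<open>States X = type 'x (finite), outputs Y = type 'y (finite).
  Matrices M :: real^'x^'x with entry M $ x $ x' = M(x|x').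
  V :: real^'x^'y with V $ y $ x' = V(y|x'), so V $ y is the vector V_y.\<close>

definition onesv :: "real^'n" where "onesv = (\<chi> i. 1)"

definition Dg :: "real^'n \<Rightarrow> real^'n^'n" where
  "Dg v = (\<chi> i j. if i = j then v $ i else 0)"

definition column_stochastic :: "real^'x^'x \<Rightarrow> bool" where
  "column_stochastic W \<longleftrightarrow> (\<forall>x x'. W $ x $ x' \<ge> 0) \<and> (\<forall>x'. (\<Sum>x\<in>UNIV. W $ x $ x') = 1)"

definition transition_to :: "real^'x^'y \<Rightarrow> bool" where
  "transition_to V \<longleftrightarrow> (\<forall>y x'. V $ y $ x' \<ge> 0) \<and> (\<forall>x'. (\<Sum>y\<in>UNIV. V $ y $ x') = 1)"

definition distribution :: "real^'x \<Rightarrow> bool" where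
  "distribution P \<longleftrightarrow> (\<forall>x. P $ x \<ge> 0) \<and> (\<Sum>x\<in>UNIV. P $ x) = 1"

definition irreducible_mat :: "real^'x^'x \<Rightarrow> bool" where
  "irreducible_mat W \<longleftrightarrow> (\<forall>x x'. (x', x) \<in> {(a, b). W $ b $ a > 0}\<^sup>+)"

definition Wy :: "real^'x^'x \<Rightarrow> real^'x^'y \<Rightarrow> 'y \<Rightarrow> real^'x^'x" where
  "Wy W V y = W ** Dg (V $ y)"

definition GI :: "real^'x^'x \<Rightarrow> real^'x^'y \<Rightarrow> ((real^'x^'x) \<times> ('y \<Rightarrow> real^'x)) set" where
  "GI W V = {(B, C). (\<forall>x x'. W $ x $ x' = 0 \<longrightarrow> B $ x $ x' = 0) \<and>
                     (\<forall>y x'. V $ y $ x' = 0 \<longrightarrow> C y $ x' = 0)}"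

definition L1I :: "real^'x^'x \<Rightarrow> real^'x^'y \<Rightarrow> ((real^'x^'x) \<times> ('y \<Rightarrow> real^'x)) set" where
  "L1I W V = {(B, C) \<in> GI W V. transpose B *v onesv = 0 \<and> (\<Sum>y\<in>UNIV. C y) = 0}"

definition L2 :: "real^'x^'x \<Rightarrow> real^'x^'y \<Rightarrow> ('y \<Rightarrow> real^'x^'x) set" where
  "L2 W V = {F. \<exists>A. transpose A *v onesv = 0 \<and> F = (\<lambda>y. Wy W V y ** A - A ** Wy W V y)}"

definition L2P :: "real^'x \<Rightarrow> real^'x^'x \<Rightarrow> real^'x^'y \<Rightarrow> ('y \<Rightarrow> real^'x^'x) set" where
  "L2P P W V = {F. \<exists>A. transpose A *v onesv = 0 \<and> A *v P = 0 \<and>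
                        F = (\<lambda>y. Wy W V y ** A - A ** Wy W V y)}"

definition L2I :: "real^'x^'x \<Rightarrow> real^'x^'y \<Rightarrow> ((real^'x^'x) \<times> ('y \<Rightarrow> real^'x)) set" where
  "L2I W V = {(B, C) \<in> L1I W V. (\<lambda>y. B ** Dg (V $ y) + W ** Dg (C y)) \<in> L2 W V}"

definition L2PI :: "real^'x \<Rightarrow> real^'x^'x \<Rightarrow> real^'x^'y \<Rightarrow> ((real^'x^'x) \<times> ('y \<Rightarrow> real^'x)) set" where
  "L2PI P W V = {(B, C) \<in> L1I W V. (\<lambda>y. B ** Dg (V $ y) + W ** Dg (C y)) \<in> L2P P W V}"

definition commut :: "real^'n^'n \<Rightarrow> real^'n^'n \<Rightarrow> real^'n^'n" where
  "commut X Y = X ** Y - Y ** X"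

end

theory Submission
  imports Defs
begin

lemma mm_diff_l: "((A::real^'n^'m) - B) ** (C::real^'k^'n) = A ** C - B ** C"
  by (simp add: vec_eq_iff matrix_matrix_mult_def sum_subtractf algebra_simps)
lemma mm_diff_r: "(C::real^'n^'m) ** ((A::real^'k^'n) - B) = C ** A - C ** B"
  by (simp add: vec_eq_iff matrix_matrix_mult_def sum_subtractf algebra_simps)
lemma mm_add_l: "((A::real^'n^'m) + B) ** (C::real^'k^'n) = A ** C + B ** C"
  by (simp add: vec_eq_iff matrix_matrix_mult_def sum.distrib algebra_simps)
lemma mm_sum_l: "(\<Sum>y\<in>S. (F y::real^'n^'m)) ** (C::real^'k^'n) = (\<Sum>y\<in>S. F y ** C)"
  apply (simp add: vec_eq_iff matrix_matrix_mult_def sum_distrib_right sum_component)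
  apply (intro allI) apply (rule sum.swap) done
lemma mm_sum_r: "(C::real^'n^'m) ** (\<Sum>y\<in>S. (F y::real^'k^'n)) = (\<Sum>y\<in>S. C ** F y)"
  apply (simp add: vec_eq_iff matrix_matrix_mult_def sum_distrib_left sum_component)
  apply (intro allI) apply (rule sum.swap) done
lemma Dg_sum: "Dg (\<Sum>y\<in>S. f y) = (\<Sum>y\<in>S. Dg (f y))"
  by (simp add: vec_eq_iff Dg_def sum_component)
lemma Dg_add: "Dg (a + b) = Dg a + Dg b"
  by (simp add: vec_eq_iff Dg_def)
lemma Dg_ones: "Dg onesv = mat 1"
  by (simp add: vec_eq_iff Dg_def onesv_def mat_def)
lemma Dg_zero: "Dg 0 = 0"
  by (simp add: vec_eq_iff Dg_def)
lemma transpose_diff: "transpose ((A::real^'n^'n) - B) = transpose A - transpose B"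
  by (simp add: vec_eq_iff transpose_def)
lemma mv_diff: "((A::real^'n^'n) - B) *v x = A *v x - B *v x"
  by (simp add: vec_eq_iff matrix_vector_mult_def sum_subtractf algebra_simps)

lemma sumV: assumes "transition_to V" shows "(\<Sum>y\<in>UNIV. V $ y) = onesv"
  using assms by (simp add: vec_eq_iff transition_to_def onesv_def sum_component)

lemma Wones: assumes "column_stochastic (W::real^'x^'x)" shows "transpose W *v onesv = onesv"
  using assms by (simp add: vec_eq_iff column_stochastic_def onesv_def matrix_vector_mult_def transpose_def)

lemma Wones2: assumes "column_stochastic (W::real^'x^'x)" shows "onesv v* W = onesv"
  using assms by (simp add: vec_eq_iff column_stochastic_def onesv_def vector_matrix_mult_def)

lemma WDg0: assumes "column_stochastic (W::real^'x^'x)" and "W ** Dg c = 0" shows "c = 0"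
proof -
  have "c $ j = 0" for j
  proof -
    have h: "W $ i $ j * c $ j = 0" for i
    proof -
      have "(W ** Dg c) $ i $ j = W $ i $ j * c $ j"
        by (simp add: matrix_matrix_mult_def Dg_def if_distrib cong: if_cong)
      then show "W $ i $ j * c $ j = 0" using assms(2) by simp
    qed
    have "(\<Sum>i\<in>UNIV. W $ i $ j) * c $ j = (\<Sum>i\<in>UNIV. W $ i $ j * c $ j)" by (simp add: sum_distrib_right)
    also have "\<dots> = 0" by (intro sum.neutral ballI h)
    finally have "(\<Sum>i\<in>UNIV. W $ i $ j) * c $ j = 0" .
    thus ?thesis using assms(1) by (simp add: column_stochastic_def)
  qed
  thus ?thesis by (simp add: vec_eq_iff)
qed

lemma mm_zero_r: "(W::real^'n^'m) ** (0::real^'k^'n) = 0"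
  by (simp add: vec_eq_iff matrix_matrix_mult_def)

lemma grp: "(a - b + d = c - b) = (c - a = (d::'a::ab_group_add))"
  by (metis add_diff_cancel_right' diff_add_eq diff_eq_eq add.commute)

lemma alg1:
  fixes W A M D :: "real^'n^'n"
  shows "(W ** A - A ** W) ** M + W ** D = W ** M ** A - A ** (W ** M) \<longleftrightarrow>
         W ** (M ** A - A ** M) = W ** D"
proof -
  have e1: "(W ** A - A ** W) ** M = W ** A ** M - A ** W ** M"
    by (simp add: mm_diff_l)
  have e2: "W ** (M ** A - A ** M) = W ** M ** A - W ** A ** M"
    by (simp add: mm_diff_r matrix_mul_assoc)
  have e3: "A ** (W ** M) = A ** W ** M" by (simp add: matrix_mul_assoc)
  show ?thesis unfolding e1 e2 e3 by (rule grp)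
qed

lemma core:
  fixes W :: "real^'x^'x" and V :: "real^'x^'y"
  assumes cs: "column_stochastic W" and tv: "transition_to V"
  shows "((B, C) \<in> L1I W V \<and> transpose A *v onesv = 0 \<and>
          (\<forall>y. B ** Dg (V $ y) + W ** Dg (C y) = Wy W V y ** A - A ** Wy W V y))
     \<longleftrightarrow> (B = commut W A \<and> (commut W A, C) \<in> GI W V \<and> transpose A *v onesv = 0 \<and>
          (\<forall>y. W ** commut (Dg (V $ y)) A = W ** Dg (C y)))"
proof -
  have sV: "(\<Sum>y\<in>UNIV. Dg (V $ y)) = mat 1"
    using sumV[OF tv] by (simp add: Dg_sum[symmetric] Dg_ones)
  have sWA: "(\<Sum>y\<in>UNIV. Wy W V y ** A) = W ** A"
    by (simp add: Wy_def mm_sum_l[symmetric] mm_sum_r[symmetric] sV)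
  have sAW: "(\<Sum>y\<in>UNIV. A ** Wy W V y) = A ** W"
    by (simp add: Wy_def mm_sum_r[symmetric] sV)
  show ?thesis
  proof
    assume h: "(B, C) \<in> L1I W V \<and> transpose A *v onesv = 0 \<and>
          (\<forall>y. B ** Dg (V $ y) + W ** Dg (C y) = Wy W V y ** A - A ** Wy W V y)"
    hence sC: "(\<Sum>y\<in>UNIV. C y) = 0" and gi: "(B, C) \<in> GI W V" by (auto simp: L1I_def)
    have "(\<Sum>y\<in>UNIV. B ** Dg (V $ y) + W ** Dg (C y)) = (\<Sum>y\<in>UNIV. Wy W V y ** A - A ** Wy W V y)"
      using h by simp
    moreover have "(\<Sum>y\<in>UNIV. B ** Dg (V $ y) + W ** Dg (C y)) = B"
      by (simp add: sum.distrib mm_sum_r[symmetric] sV Dg_sum[symmetric] sC Dg_zero mm_zero_r sumV[OF tv] Dg_ones)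
    moreover have "(\<Sum>y\<in>UNIV. Wy W V y ** A - A ** Wy W V y) = W ** A - A ** W"
      by (simp add: sum_subtractf sWA sAW)
    ultimately have B: "B = commut W A" by (simp add: commut_def)
    show "B = commut W A \<and> (commut W A, C) \<in> GI W V \<and> transpose A *v onesv = 0 \<and>
          (\<forall>y. W ** commut (Dg (V $ y)) A = W ** Dg (C y))"
      using h gi B by (auto simp: commut_def Wy_def alg1)
  next
    assume h: "B = commut W A \<and> (commut W A, C) \<in> GI W V \<and> transpose A *v onesv = 0 \<and>
          (\<forall>y. W ** commut (Dg (V $ y)) A = W ** Dg (C y))"
    have t: "transpose B *v onesv = 0"
      using h by (simp add: commut_def transpose_diff mv_diff matrix_transpose_mul
          matrix_vector_mul_assoc[symmetric] Wones[OF cs] Wones2[OF cs])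
    have "W ** Dg (\<Sum>y\<in>UNIV. C y) = (\<Sum>y\<in>UNIV. W ** commut (Dg (V $ y)) A)"
      using h by (simp add: Dg_sum mm_sum_r)
    also have "\<dots> = W ** ((\<Sum>y\<in>UNIV. Dg (V $ y)) ** A - A ** (\<Sum>y\<in>UNIV. Dg (V $ y)))"
      by (simp add: commut_def mm_sum_r mm_sum_l sum_subtractf mm_diff_r)
    also have "\<dots> = 0" by (simp add: sV mm_zero_r)
    finally have "(\<Sum>y\<in>UNIV. C y) = 0" using WDg0[OF cs] by blast
    with h t show "(B, C) \<in> L1I W V \<and> transpose A *v onesv = 0 \<and>
          (\<forall>y. B ** Dg (V $ y) + W ** Dg (C y) = Wy W V y ** A - A ** Wy W V y)"
      by (auto simp: L1I_def commut_def Wy_def alg1)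
  qed
qed

theorem theorem4:
  fixes W :: "real^'x^'x" and V :: "real^'x^'y" and P :: "real^'x"
  assumes "column_stochastic W" and "transition_to V" and "irreducible_mat W"
    and "distribution P"
  shows "L2I W V = {(commut W A, C) | A C. (commut W A, C) \<in> GI W V \<and>
            transpose A *v onesv = 0 \<and>
            (\<forall>y. W ** commut (Dg (V $ y)) A = W ** Dg (C y))} \<and>
    L2PI P W V = {(commut W A, C) | A C. (commut W A, C) \<in> GI W V \<and>
            transpose A *v onesv = 0 \<and> A *v P = 0 \<and>
            (\<forall>y. W ** commut (Dg (V $ y)) A = W ** Dg (C y))}"
proof -
  note c = core[OF assms(1,2)]
  have 1: "(B, C) \<in> L2I W V \<longleftrightarrow> (\<exists>A. B = commut W A \<and> (commut W A, C) \<in> GI W V \<and>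
     transpose A *v onesv = 0 \<and> (\<forall>y. W ** commut (Dg (V $ y)) A = W ** Dg (C y)))" for B C
  proof -
    have "(B, C) \<in> L2I W V \<longleftrightarrow> (\<exists>A. (B, C) \<in> L1I W V \<and> transpose A *v onesv = 0 \<and>
          (\<forall>y. B ** Dg (V $ y) + W ** Dg (C y) = Wy W V y ** A - A ** Wy W V y))"
      unfolding L2I_def L2_def by (auto simp: fun_eq_iff)
    thus ?thesis by (simp only: c)
  qed
  have 2: "(B, C) \<in> L2PI P W V \<longleftrightarrow> (\<exists>A. (B = commut W A \<and> (commut W A, C) \<in> GI W V \<and>
     transpose A *v onesv = 0 \<and> (\<forall>y. W ** commut (Dg (V $ y)) A = W ** Dg (C y))) \<and> A *v P = 0)" for B C
  proof -
    have "(B, C) \<in> L2PI P W V \<longleftrightarrow> (\<exists>A. ((B, C) \<in> L1I W V \<and> transpose A *v onesv = 0 \<and>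
          (\<forall>y. B ** Dg (V $ y) + W ** Dg (C y) = Wy W V y ** A - A ** Wy W V y)) \<and> A *v P = 0)"
      unfolding L2PI_def L2P_def by (auto simp: fun_eq_iff)
    thus ?thesis by (simp only: c)
  qed
  show ?thesis
    apply (rule conjI)
     apply (rule set_eqI) apply (case_tac x) apply (simp only: 1) apply blast
    apply (rule set_eqI) apply (case_tac x) apply (simp only: 2) apply blast
    done
qed

end
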